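(* Let $k\ge 1$ be an integer. Then (i) for each $n\ge 1$, $\chi_{\mu_k}(P_n)=\lceil n/2\rceil$; and (ii) for each $n\ge 3$, $\chi_{\mu_k}(C_n)=\lceil n/3\rceil$ if $n\le 3k$, and $\chi_{\mu_k}(C_n)=\lceil n/2\rceil$ otherwise.
   Context: $P_n$ and $C_n$ denote the path and cycle on $n$ vertices. A $u,v$-geodesic is a shortest $u,v$-path. For a positive integer $k$, a set $M\subseteq V(G)$ is a $k$-distance mutual-visibility set if for every two vertices $u,v\in M$ there exists a $u,v$-geodesic of length at most $k$ none of whose internal vertices lies in $M$. $\chi_{\mu_k}(G)$ is the minimum cardinality of a partition of $V(G)$ into $k$-distance mutual-visibility sets. *)

theory Defs
  imports Main
begin

text \<open>A graph is given by a vertex set V and a (symmetric, irreflexive) adjacency relation E.\<close>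

definition is_walk :: "'a set \<Rightarrow> ('a \<Rightarrow> 'a \<Rightarrow> bool) \<Rightarrow> 'a list \<Rightarrow> 'a \<Rightarrow> 'a \<Rightarrow> bool" where
  "is_walk V E p u v \<longleftrightarrow> p \<noteq> [] \<and> hd p = u \<and> last p = v \<and> set p \<subseteq> V \<and>
     (\<forall>i. Suc i < length p \<longrightarrow> E (p ! i) (p ! Suc i))"

definition walk_len :: "'a list \<Rightarrow> nat" where
  "walk_len p = length p - 1"

definition gdist :: "'a set \<Rightarrow> ('a \<Rightarrow> 'a \<Rightarrow> bool) \<Rightarrow> 'a \<Rightarrow> 'a \<Rightarrow> nat" where
  "gdist V E u v = (LEAST d. \<exists>p. is_walk V E p u v \<and> walk_len p = d)"

definition is_geodesic :: "'a set \<Rightarrow> ('a \<Rightarrow> 'a \<Rightarrow> bool) \<Rightarrow> 'a list \<Rightarrow> 'a \<Rightarrow> 'a \<Rightarrow> bool" where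
  "is_geodesic V E p u v \<longleftrightarrow> is_walk V E p u v \<and> walk_len p = gdist V E u v"

definition internal :: "'a list \<Rightarrow> 'a set" where
  "internal p = set (butlast (tl p))"

definition k_dist_mv_set :: "nat \<Rightarrow> 'a set \<Rightarrow> ('a \<Rightarrow> 'a \<Rightarrow> bool) \<Rightarrow> 'a set \<Rightarrow> bool" where
  "k_dist_mv_set k V E M \<longleftrightarrow> M \<subseteq> V \<and>
     (\<forall>u\<in>M. \<forall>v\<in>M. u \<noteq> v \<longrightarrow>
        (\<exists>p. is_geodesic V E p u v \<and> walk_len p \<le> k \<and> internal p \<inter> M = {}))"

definition is_partition :: "'a set \<Rightarrow> 'a set set \<Rightarrow> bool" where
  "is_partition V P \<longleftrightarrow> \<Union>P = V \<and> (\<forall>X\<in>P. X \<noteq> {}) \<and>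
     (\<forall>X\<in>P. \<forall>Y\<in>P. X \<noteq> Y \<longrightarrow> X \<inter> Y = {})"

definition chi_mu :: "nat \<Rightarrow> 'a set \<Rightarrow> ('a \<Rightarrow> 'a \<Rightarrow> bool) \<Rightarrow> nat" where
  "chi_mu k V E = (LEAST n. \<exists>P. is_partition V P \<and> finite P \<and> card P = n \<and>
       (\<forall>X\<in>P. k_dist_mv_set k V E X))"

definition path_V :: "nat \<Rightarrow> nat set" where "path_V n = {0..<n}"
definition path_E :: "nat \<Rightarrow> nat \<Rightarrow> bool" where "path_E i j \<longleftrightarrow> Suc i = j \<or> Suc j = i"

definition cycle_V :: "nat \<Rightarrow> nat set" where "cycle_V n = {0..<n}"
definition cycle_E :: "nat \<Rightarrow> nat \<Rightarrow> nat \<Rightarrow> bool" where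
  "cycle_E n i j \<longleftrightarrow> Suc i mod n = j \<or> Suc j mod n = i"

end

theory Submission
  imports Defs
begin

lemma walk_pot:
  fixes f :: "'a \<Rightarrow> int"
  assumes "p \<noteq> []" "\<forall>i. Suc i < length p \<longrightarrow> \<bar>f (p!Suc i) - f (p!i)\<bar> \<le> 1"
  shows "\<bar>f (last p) - f (hd p)\<bar> \<le> int (length p - 1)"
proof -
  have "\<forall>i<length p. \<bar>f (p!i) - f (p!0)\<bar> \<le> int i"
  proof (intro allI impI)
    fix i assume "i < length p" then show "\<bar>f (p!i) - f (p!0)\<bar> \<le> int i"
    proof (induction i)
      case 0 then show ?case by simp
    next
      case (Suc i)
      then have "\<bar>f (p!i) - f (p!0)\<bar> \<le> int i" by simp
      moreover have "\<bar>f (p!Suc i) - f (p!i)\<bar> \<le> 1" using assms(2) Suc.prems by blast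
      ultimately show ?case by simp
    qed
  qed
  then show ?thesis using assms(1) by (simp add: last_conv_nth hd_conv_nth)
qed

lemma walk_region:
  assumes "p \<noteq> []" "hd p \<in> R" "\<forall>i. Suc i < length p \<longrightarrow> p!i \<in> R \<longrightarrow> p!Suc i \<in> R"
  shows "last p \<in> R"
proof -
  have "\<forall>i<length p. p!i \<in> R"
  proof (intro allI impI)
    fix i assume "i < length p" then show "p!i \<in> R"
      by (induction i) (use assms in \<open>auto simp: hd_conv_nth\<close>)
  qed
  then show ?thesis using assms(1) by (simp add: last_conv_nth)
qed

lemma internal_nth: "internal p = {p ! i |i. 0 < i \<and> i + 1 < length p}"
proof -
  have "internal p = {butlast (tl p) ! j |j. j < length p - 2}"
    unfolding internal_def by (auto simp: set_conv_nth)
  also have "\<dots> = {p ! i |i. 0 < i \<and> i + 1 < length p}"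
  proof safe
    fix j assume "j < length p - 2"
    then show "\<exists>i. butlast (tl p) ! j = p ! i \<and> 0 < i \<and> i + 1 < length p"
      by (intro exI[of _ "Suc j"]) (auto simp: nth_butlast nth_tl)
  next
    fix i assume "0 < i" "i + 1 < length p"
    then show "\<exists>j. p ! i = butlast (tl p) ! j \<and> j < length p - 2"
      by (intro exI[of _ "i - 1"]) (auto simp: nth_butlast nth_tl)
  qed
  finally show ?thesis .
qed

lemma set_walk_sub: "set p \<subseteq> {hd p, last p} \<union> internal p"
proof
  fix x assume "x \<in> set p"
  then obtain i where i: "i < length p" "x = p ! i" by (auto simp: set_conv_nth)
  show "x \<in> {hd p, last p} \<union> internal p"
  proof (cases "i = 0")
    case True then show ?thesis using i by (simp add: hd_conv_nth)
  next
    case False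
    show ?thesis
    proof (cases "i + 1 = length p")
      case True
      have "p \<noteq> []" using i by auto
      moreover have "i = length p - 1" using True by simp
      ultimately have "last p = p ! i" by (simp add: last_conv_nth)
      then show ?thesis using i by simp
    next
      case False
      then show ?thesis using i \<open>i \<noteq> 0\<close> unfolding internal_nth by auto
    qed
  qed
qed

lemma tl_rev': "tl (rev p) = rev (butlast p)"
  by (cases p rule: rev_cases) auto

lemma internal_rev: "internal (rev p) = internal p"
  unfolding internal_def by (simp add: tl_rev' butlast_rev butlast_tl)

lemma walk_rev:
  assumes "is_walk V E p u v" "\<And>x y. E x y \<Longrightarrow> E y x"
  shows "is_walk V E (rev p) v u"
  using assms unfolding is_walk_def
  apply (auto simp: hd_rev last_rev rev_nth)
  subgoal for i
    apply (rule assms(2))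
    apply (drule spec[of _ "length p - Suc (Suc i)"])
    by (simp add: Suc_diff_Suc)
  done

lemma geodesicI:
  assumes "is_walk V E p u v" "\<And>q. is_walk V E q u v \<Longrightarrow> walk_len p \<le> walk_len q"
  shows "is_geodesic V E p u v"
  unfolding is_geodesic_def gdist_def
  using assms by (auto intro!: Least_equality[symmetric])

lemma geodesic_le:
  assumes "is_geodesic V E p u v" "is_walk V E q u v"
  shows "walk_len p \<le> walk_len q"
  using assms unfolding is_geodesic_def gdist_def by (auto intro: Least_le)

lemma geodesic_rev:
  assumes "is_geodesic V E p u v" "\<And>x y. E x y \<Longrightarrow> E y x"
  shows "is_geodesic V E (rev p) v u"
proof (rule geodesicI)
  show "is_walk V E (rev p) v u" using assms walk_rev unfolding is_geodesic_def by metis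
  fix q assume "is_walk V E q v u"
  then have "is_walk V E (rev q) u v" using walk_rev assms(2) by metis
  then have "walk_len p \<le> walk_len (rev q)" using geodesic_le assms(1) by metis
  then show "walk_len (rev p) \<le> walk_len q" by (simp add: walk_len_def)
qed

lemma edge_geodesic:
  assumes "E u v" "u \<in> V" "v \<in> V" "u \<noteq> v"
  shows "is_geodesic V E [u, v] u v" "walk_len [u,v] = 1" "internal [u,v] = {}"
proof -
  show "is_geodesic V E [u, v] u v"
  proof (rule geodesicI)
    show "is_walk V E [u, v] u v" using assms unfolding is_walk_def
      by (auto simp: less_Suc_eq)
    fix q assume q: "is_walk V E q u v"
    have "length q \<noteq> 1"
    proof
      assume "length q = 1"
      then obtain x where "q = [x]" by (cases q) auto
      then show False using q assms(4) unfolding is_walk_def by auto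
    qed
    moreover have "q \<noteq> []" using q unfolding is_walk_def by auto
    moreover have "length q > 0" using \<open>q \<noteq> []\<close> by simp
    ultimately have "length q \<ge> 2" by linarith
    then show "walk_len [u, v] \<le> walk_len q" by (simp add: walk_len_def)
  qed
  show "walk_len [u,v] = 1" by (simp add: walk_len_def)
  show "internal [u,v] = {}" by (simp add: internal_def)
qed

lemma mv_from_lt:
  fixes M :: "nat set"
  assumes "M \<subseteq> V" "\<And>x y. E x y \<Longrightarrow> E y x"
    "\<And>u v. u \<in> M \<Longrightarrow> v \<in> M \<Longrightarrow> u < v \<Longrightarrow>
        \<exists>p. is_geodesic V E p u v \<and> walk_len p \<le> k \<and> internal p \<inter> M = {}"
  shows "k_dist_mv_set k V E M"
  unfolding k_dist_mv_set_def
proof (intro conjI ballI impI)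
  show "M \<subseteq> V" by fact
  fix u v assume uv: "u \<in> M" "v \<in> M" "u \<noteq> v"
  show "\<exists>p. is_geodesic V E p u v \<and> walk_len p \<le> k \<and> internal p \<inter> M = {}"
  proof (cases "u < v")
    case True then show ?thesis using assms(3) uv by blast
  next
    case False
    then have "v < u" using uv by simp
    then obtain p where "is_geodesic V E p v u" "walk_len p \<le> k" "internal p \<inter> M = {}"
      using assms(3) uv by blast
    moreover have "is_geodesic V E (rev p) u v" by (rule geodesic_rev[OF calculation(1)]) (rule assms(2))
    ultimately show ?thesis using internal_rev[of p]
      by (intro exI[of _ "rev p"]) (auto simp: walk_len_def)
  qed
qed

lemma chi_eqI:
  assumes "is_partition V P0" "finite P0" "card P0 = m" "\<forall>X\<in>P0. k_dist_mv_set k V E X"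
    "\<And>P. is_partition V P \<Longrightarrow> finite P \<Longrightarrow> (\<forall>X\<in>P. k_dist_mv_set k V E X) \<Longrightarrow> m \<le> card P"
  shows "chi_mu k V E = m"
  unfolding chi_mu_def
  using assms by (intro Least_equality) auto

lemma card_part_le:
  assumes "is_partition V P" "finite P" "\<forall>X\<in>P. card X \<le> c"
  shows "card V \<le> c * card P"
proof -
  have "card V \<le> sum card P" using card_Union_le_sum_card assms(1) unfolding is_partition_def by metis
  also have "\<dots> \<le> c * card P" using sum_bounded_above[of P card c] assms(3) by (simp add: mult.commute)
  finally show ?thesis .
qed

lemma card_le2:
  fixes X :: "nat set"
  assumes "finite X" "\<And>a b c. a \<in> X \<Longrightarrow> b \<in> X \<Longrightarrow> c \<in> X \<Longrightarrow> a < b \<Longrightarrow> b < c \<Longrightarrow> False"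
  shows "card X \<le> 2"
proof (rule ccontr)
  assume "\<not> card X \<le> 2"
  define xs where "xs = sorted_list_of_set X"
  have l: "length xs = card X" "set xs = X" "sorted_wrt (<) xs"
    using assms(1) by (auto simp: xs_def)
  have "xs!0 < xs!1" "xs!1 < xs!2" using l \<open>\<not> card X \<le> 2\<close>
    sorted_wrt_nth_less[OF l(3), of 0 1] sorted_wrt_nth_less[OF l(3), of 1 2] by auto
  moreover have "xs!0 \<in> X" "xs!1 \<in> X" "xs!2 \<in> X" using l \<open>\<not> card X \<le> 2\<close>
    nth_mem[of 0 xs] nth_mem[of 1 xs] nth_mem[of 2 xs] by auto
  ultimately show False using assms(2) by blast
qed

lemma card_le3:
  fixes X :: "nat set"
  assumes "finite X" "\<And>a b c d. a \<in> X \<Longrightarrow> b \<in> X \<Longrightarrow> c \<in> X \<Longrightarrow> d \<in> X \<Longrightarrow> a < b \<Longrightarrow> b < c \<Longrightarrow> c < d \<Longrightarrow> False"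
  shows "card X \<le> 3"
proof (rule ccontr)
  assume "\<not> card X \<le> 3"
  define xs where "xs = sorted_list_of_set X"
  have l: "length xs = card X" "set xs = X" "sorted_wrt (<) xs"
    using assms(1) by (auto simp: xs_def)
  have "xs!0 < xs!1" "xs!1 < xs!2" "xs!2 < xs!3" using l \<open>\<not> card X \<le> 3\<close>
    sorted_wrt_nth_less[OF l(3), of 0 1] sorted_wrt_nth_less[OF l(3), of 1 2]
    sorted_wrt_nth_less[OF l(3), of 2 3] by auto
  moreover have "xs!0 \<in> X" "xs!1 \<in> X" "xs!2 \<in> X" "xs!3 \<in> X" using l \<open>\<not> card X \<le> 3\<close>
    nth_mem[of 0 xs] nth_mem[of 1 xs] nth_mem[of 2 xs] nth_mem[of 3 xs] by auto
  ultimately show False using assms(2) by blast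
qed

lemma path_no3:
  assumes "k_dist_mv_set k (path_V n) path_E X" "a \<in> X" "b \<in> X" "c \<in> X" "a < b" "b < c"
  shows False
proof -
  obtain p where p: "is_geodesic (path_V n) path_E p a c" "internal p \<inter> X = {}"
    using assms unfolding k_dist_mv_set_def by (metis less_not_refl order.strict_trans)
  have w: "is_walk (path_V n) path_E p a c" using p unfolding is_geodesic_def by simp
  have "b \<notin> set p" using set_walk_sub[of p] p(2) w assms unfolding is_walk_def by auto
  have "last p \<in> {x. x < b}"
  proof (rule walk_region)
    show "p \<noteq> []" "hd p \<in> {x. x < b}" using w assms unfolding is_walk_def by auto
    show "\<forall>i. Suc i < length p \<longrightarrow> p ! i \<in> {x. x < b} \<longrightarrow> p ! Suc i \<in> {x. x < b}"
    proof (intro allI impI)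
      fix i assume i: "Suc i < length p" "p ! i \<in> {x. x < b}"
      have "path_E (p!i) (p!Suc i)" using w i unfolding is_walk_def by auto
      moreover have "p ! Suc i \<noteq> b" using \<open>b \<notin> set p\<close> i nth_mem by metis
      ultimately show "p ! Suc i \<in> {x. x < b}" using i unfolding path_E_def by auto
    qed
  qed
  then show False using w assms unfolding is_walk_def by auto
qed

lemma path_part:
  assumes "k \<ge> 1" "n \<ge> 1"
  shows "chi_mu k (path_V n) path_E = (n + 1) div 2"
proof -
  define S where "S i = {2*i, 2*i+1} \<inter> {0..<n}" for i :: nat
  define P0 where "P0 = S ` {..<(n+1) div 2}"
  have inj: "inj_on S {..<(n+1) div 2}"
  proof
    fix i j assume "i \<in> {..<(n+1) div 2}" "j \<in> {..<(n+1) div 2}" "S i = S j"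
    then have "2*i \<in> S j" unfolding S_def by auto
    then show "i = j" unfolding S_def by auto
  qed
  have part: "is_partition (path_V n) P0"
    unfolding is_partition_def P0_def path_V_def
  proof (intro conjI ballI impI)
    show "\<Union> (S ` {..<(n + 1) div 2}) = {0..<n}"
    proof
      show "\<Union> (S ` {..<(n + 1) div 2}) \<subseteq> {0..<n}" unfolding S_def by auto
      show "{0..<n} \<subseteq> \<Union> (S ` {..<(n + 1) div 2})"
      proof
        fix x assume "x \<in> {0..<n}"
        then have "x \<in> S (x div 2)" "x div 2 \<in> {..<(n+1) div 2}" unfolding S_def by auto
        then show "x \<in> \<Union> (S ` {..<(n + 1) div 2})" by blast
      qed
    qed
    fix X assume "X \<in> S ` {..<(n + 1) div 2}"
    then obtain i where "i < (n+1) div 2" "X = S i" by auto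
    then show "X \<noteq> {}" unfolding S_def by auto
  next
    fix X Y assume "X \<in> S ` {..<(n + 1) div 2}" "Y \<in> S ` {..<(n + 1) div 2}" "X \<noteq> Y"
    then obtain i j where "X = S i" "Y = S j" "i \<noteq> j" by auto
    then show "X \<inter> Y = {}" unfolding S_def by auto
  qed
  have mv: "\<forall>X\<in>P0. k_dist_mv_set k (path_V n) path_E X"
  proof
    fix X assume "X \<in> P0"
    then obtain i where X: "X = S i" unfolding P0_def by auto
    show "k_dist_mv_set k (path_V n) path_E X"
    proof (rule mv_from_lt)
      show "X \<subseteq> path_V n" unfolding X S_def path_V_def by auto
      show "\<And>x y. path_E x y \<Longrightarrow> path_E y x" unfolding path_E_def by auto
      fix u v assume uv: "u \<in> X" "v \<in> X" "u < v"
      then have "u = 2*i" "v = 2*i+1" "v < n" unfolding X S_def by auto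
      then have "path_E u v" "u \<in> path_V n" "v \<in> path_V n" "u \<noteq> v"
        unfolding path_E_def path_V_def by auto
      note e = edge_geodesic[of path_E u v "path_V n", OF this]
      show "\<exists>p. is_geodesic (path_V n) path_E p u v \<and> walk_len p \<le> k \<and> internal p \<inter> X = {}"
        using e assms(1) by (intro exI[of _ "[u,v]"]) auto
    qed
  qed
  show ?thesis
  proof (rule chi_eqI[OF part _ _ mv])
    show "finite P0" unfolding P0_def by simp
    show "card P0 = (n + 1) div 2" unfolding P0_def using card_image[OF inj] by simp
    fix P assume P: "is_partition (path_V n) P" "finite P" "\<forall>X\<in>P. k_dist_mv_set k (path_V n) path_E X"
    have "\<forall>X\<in>P. card X \<le> 2"
    proof
      fix X assume "X \<in> P"
      then have mvX: "k_dist_mv_set k (path_V n) path_E X" "X \<subseteq> path_V n"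
        using P unfolding is_partition_def by auto
      show "card X \<le> 2"
        by (rule card_le2) (use mvX path_no3 in \<open>auto simp: path_V_def intro: finite_subset\<close>)
    qed
    from card_part_le[OF P(1,2) this] have "n \<le> 2 * card P" by (simp add: path_V_def)
    then show "(n + 1) div 2 \<le> card P" by linarith
  qed
qed

definition fw :: "nat \<Rightarrow> nat \<Rightarrow> nat \<Rightarrow> nat" where
  "fw n u x = (if u \<le> x then x - u else x + n - u)"
definition cd :: "nat \<Rightarrow> nat \<Rightarrow> nat \<Rightarrow> nat" where
  "cd n u x = min (fw n u x) (fw n x u)"
definition gg :: "nat \<Rightarrow> nat \<Rightarrow> nat \<Rightarrow> nat" where
  "gg n c x = (if c < x then x - c - 1 else x + n - c - 1)"

lemma cyc_adj:
  assumes "x < n" "y < n" "cycle_E n x y"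
  shows "(Suc x < n \<and> y = Suc x) \<or> (Suc x = n \<and> y = 0) \<or> (Suc y < n \<and> x = Suc y) \<or> (Suc y = n \<and> x = 0)"
  using assms unfolding cycle_E_def by (auto simp: mod_Suc split: if_splits)

lemma cd_step1:
  assumes "u < n" "Suc x < n"
  shows "\<bar>int (cd n u (Suc x)) - int (cd n u x)\<bar> \<le> 1"
proof (cases "u \<le> x")
  case True then show ?thesis using assms unfolding cd_def fw_def min_def by auto
next
  case False
  then show ?thesis using assms unfolding cd_def fw_def min_def by auto
qed

lemma cd_step2:
  assumes "u < n" "Suc x = n"
  shows "\<bar>int (cd n u 0) - int (cd n u x)\<bar> \<le> 1"
  using assms unfolding cd_def fw_def min_def by auto

lemma cd_step:
  assumes "u < n" "x < n" "y < n" "cycle_E n x y"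
  shows "\<bar>int (cd n u y) - int (cd n u x)\<bar> \<le> 1"
  using cyc_adj[OF assms(2-4)]
proof (elim disjE conjE)
  assume "Suc x < n" "y = Suc x" then show ?thesis using cd_step1[OF assms(1)] by simp
next
  assume "Suc x = n" "y = 0" then show ?thesis using cd_step2[OF assms(1)] by simp
next
  assume "Suc y < n" "x = Suc y" then show ?thesis using cd_step1[OF assms(1), of y] by simp
next
  assume "Suc y = n" "x = 0" then show ?thesis using cd_step2[OF assms(1), of y] by simp
qed

lemma gg_step1:
  assumes "c < n" "Suc x < n" "x \<noteq> c" "Suc x \<noteq> c"
  shows "\<bar>int (gg n c (Suc x)) - int (gg n c x)\<bar> \<le> 1"
  using assms unfolding gg_def by auto

lemma gg_step2:
  assumes "c < n" "Suc x = n" "x \<noteq> c" "0 \<noteq> c"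
  shows "\<bar>int (gg n c 0) - int (gg n c x)\<bar> \<le> 1"
  using assms unfolding gg_def by auto

lemma gg_step:
  assumes "c < n" "x < n" "y < n" "cycle_E n x y" "x \<noteq> c" "y \<noteq> c"
  shows "\<bar>int (gg n c y) - int (gg n c x)\<bar> \<le> 1"
  using cyc_adj[OF assms(2-4)]
proof (elim disjE conjE)
  assume "Suc x < n" "y = Suc x" then show ?thesis using gg_step1[OF assms(1)] assms by simp
next
  assume "Suc x = n" "y = 0" then show ?thesis using gg_step2[OF assms(1)] assms by simp
next
  assume "Suc y < n" "x = Suc y" then show ?thesis using gg_step1[OF assms(1), of y] assms by simp
next
  assume "Suc y = n" "x = 0" then show ?thesis using gg_step2[OF assms(1), of y] assms by simp
qed

lemma cyc_dist_lb:
  assumes "is_walk (cycle_V n) (cycle_E n) q u v"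
  shows "cd n u v \<le> walk_len q"
proof -
  have "q \<noteq> []" using assms unfolding is_walk_def by auto
  then have "hd q \<in> set q" "last q \<in> set q" by auto
  then have uv: "u < n" "v < n" using assms unfolding is_walk_def cycle_V_def by auto
  have "\<bar>int (cd n u (last q)) - int (cd n u (hd q))\<bar> \<le> int (length q - 1)"
  proof (rule walk_pot)
    show "q \<noteq> []" using assms unfolding is_walk_def by auto
    show "\<forall>i. Suc i < length q \<longrightarrow> \<bar>int (cd n u (q ! Suc i)) - int (cd n u (q ! i))\<bar> \<le> 1"
    proof (intro allI impI)
      fix i assume i: "Suc i < length q"
      have "q ! i \<in> set q" "q ! Suc i \<in> set q" using i by auto
      then have "q ! i < n" "q ! Suc i < n" using assms unfolding is_walk_def cycle_V_def by auto
      then show "\<bar>int (cd n u (q ! Suc i)) - int (cd n u (q ! i))\<bar> \<le> 1"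
        using cd_step[OF uv(1)] assms i unfolding is_walk_def by blast
    qed
  qed
  moreover have "cd n u u = 0" unfolding cd_def fw_def by simp
  ultimately show ?thesis using assms unfolding is_walk_def walk_len_def by auto
qed

lemma avoid_lb:
  assumes "is_walk (cycle_V n) (cycle_E n) q u v" "c \<notin> set q" "c < n"
  shows "\<bar>int (gg n c v) - int (gg n c u)\<bar> \<le> int (walk_len q)"
proof -
  have "\<bar>int (gg n c (last q)) - int (gg n c (hd q))\<bar> \<le> int (length q - 1)"
  proof (rule walk_pot)
    show "q \<noteq> []" using assms unfolding is_walk_def by auto
    show "\<forall>i. Suc i < length q \<longrightarrow> \<bar>int (gg n c (q ! Suc i)) - int (gg n c (q ! i))\<bar> \<le> 1"
    proof (intro allI impI)
      fix i assume i: "Suc i < length q"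
      have "q ! i \<in> set q" "q ! Suc i \<in> set q" using i by auto
      then have "q ! i < n" "q ! Suc i < n" "q ! i \<noteq> c" "q ! Suc i \<noteq> c"
        using assms unfolding is_walk_def cycle_V_def by auto
      then show "\<bar>int (gg n c (q ! Suc i)) - int (gg n c (q ! i))\<bar> \<le> 1"
        using gg_step[OF assms(3)] assms i unfolding is_walk_def by blast
    qed
  qed
  then show ?thesis using assms unfolding is_walk_def walk_len_def by auto
qed

lemma mv_avoid:
  assumes "k_dist_mv_set k V E X" "u \<in> X" "v \<in> X" "w \<in> X" "u \<noteq> v" "w \<noteq> u" "w \<noteq> v"
  shows "\<exists>p. is_walk V E p u v \<and> walk_len p \<le> k \<and> w \<notin> set p"
proof -
  obtain p where p: "is_geodesic V E p u v" "walk_len p \<le> k" "internal p \<inter> X = {}"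
    using assms unfolding k_dist_mv_set_def by metis
  have w: "is_walk V E p u v" using p unfolding is_geodesic_def by simp
  have "w \<notin> set p" using set_walk_sub[of p] p(3) w assms unfolding is_walk_def by auto
  then show ?thesis using w p by blast
qed

lemma cycle_no3:
  assumes "k_dist_mv_set k (cycle_V n) (cycle_E n) X" "a \<in> X" "b \<in> X" "c \<in> X" "a < b" "b < c"
    "3 * k < n"
  shows False
proof -
  have "c < n" using assms(1,4) unfolding k_dist_mv_set_def cycle_V_def by auto
  obtain p1 where p1: "is_walk (cycle_V n) (cycle_E n) p1 a b" "walk_len p1 \<le> k" "c \<notin> set p1"
    using mv_avoid[OF assms(1-4)] assms by auto
  obtain p2 where p2: "is_walk (cycle_V n) (cycle_E n) p2 b c" "walk_len p2 \<le> k" "a \<notin> set p2"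
    using mv_avoid[OF assms(1) assms(3) assms(4) assms(2)] assms by auto
  obtain p3 where p3: "is_walk (cycle_V n) (cycle_E n) p3 a c" "walk_len p3 \<le> k" "b \<notin> set p3"
    using mv_avoid[OF assms(1) assms(2) assms(4) assms(3)] assms by auto
  have 1: "\<bar>int (gg n c b) - int (gg n c a)\<bar> \<le> int k"
    using avoid_lb[OF p1(1,3) \<open>c < n\<close>] p1(2) by linarith
  have 2: "\<bar>int (gg n a c) - int (gg n a b)\<bar> \<le> int k"
    using avoid_lb[OF p2(1,3)] p2(2) \<open>c < n\<close> assms by linarith
  have 3: "\<bar>int (gg n b c) - int (gg n b a)\<bar> \<le> int k"
    using avoid_lb[OF p3(1,3)] p3(2) \<open>c < n\<close> assms by linarith
  show False using 1 2 3 assms \<open>c < n\<close> unfolding gg_def by auto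
qed

lemma cycle_no4:
  assumes "k_dist_mv_set k (cycle_V n) (cycle_E n) X" "a \<in> X" "b \<in> X" "c \<in> X" "d \<in> X"
    "a < b" "b < c" "c < d"
  shows False
proof -
  obtain p where p: "is_geodesic (cycle_V n) (cycle_E n) p a c" "internal p \<inter> X = {}"
    using assms unfolding k_dist_mv_set_def by (metis less_not_refl order.strict_trans)
  have w: "is_walk (cycle_V n) (cycle_E n) p a c" using p unfolding is_geodesic_def by simp
  have "b \<notin> set p" "d \<notin> set p" using set_walk_sub[of p] p(2) w assms unfolding is_walk_def by auto
  have "d < n" using assms(1,5) unfolding k_dist_mv_set_def cycle_V_def by auto
  have "last p \<in> {x. x < b \<or> d < x}"
  proof (rule walk_region)
    show "p \<noteq> []" "hd p \<in> {x. x < b \<or> d < x}" using w assms unfolding is_walk_def by auto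
    show "\<forall>i. Suc i < length p \<longrightarrow> p ! i \<in> {x. x < b \<or> d < x} \<longrightarrow> p ! Suc i \<in> {x. x < b \<or> d < x}"
    proof (intro allI impI)
      fix i assume i: "Suc i < length p" "p ! i \<in> {x. x < b \<or> d < x}"
      have "cycle_E n (p!i) (p!Suc i)" using w i unfolding is_walk_def by auto
      moreover have "p ! Suc i \<noteq> b" "p ! Suc i \<noteq> d" using \<open>b \<notin> set p\<close> \<open>d \<notin> set p\<close> i nth_mem by metis+
      moreover have "p ! i \<in> set p" "p ! Suc i \<in> set p" using i by auto
      then have "p ! i < n" "p ! Suc i < n" using w unfolding is_walk_def cycle_V_def by auto
      ultimately show "p ! Suc i \<in> {x. x < b \<or> d < x}" using i cyc_adj[of "p!i" n "p ! Suc i"] assms \<open>d < n\<close>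
        by auto
    qed
  qed
  then show False using w assms unfolding is_walk_def by auto
qed

definition fwalk :: "nat \<Rightarrow> nat \<Rightarrow> nat \<Rightarrow> nat list" where
  "fwalk n u L = map (\<lambda>i. (u + i) mod n) [0..<Suc L]"

lemma fwalk:
  assumes "u < n"
  shows "is_walk (cycle_V n) (cycle_E n) (fwalk n u L) u ((u + L) mod n)"
    "walk_len (fwalk n u L) = L"
    "internal (fwalk n u L) = {(u + i) mod n | i. 0 < i \<and> i < L}"
proof -
  show "is_walk (cycle_V n) (cycle_E n) (fwalk n u L) u ((u + L) mod n)"
    unfolding is_walk_def fwalk_def cycle_V_def cycle_E_def
    using assms by (auto simp: hd_map last_map mod_Suc_eq nth_Cons' simp del: upt_Suc)
  show "walk_len (fwalk n u L) = L" unfolding walk_len_def fwalk_def by simp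
  show "internal (fwalk n u L) = {(u + i) mod n | i. 0 < i \<and> i < L}"
    unfolding internal_nth fwalk_def
  proof (safe, goal_cases)
    case (1 x i) then show ?case by (auto simp del: upt_Suc)
  next
    case (2 x i)
    then show ?case by (intro exI[of _ i]) (auto simp del: upt_Suc)
  qed
qed

lemma mod_gap:
  fixes a m r i :: nat
  assumes "a mod m = r" "(a + i) mod m = r" "0 < i" "i < m"
  shows False
proof -
  have "m dvd (a + i - a)" using mod_eq_dvd_iff_nat[of a "a+i" m] assms by simp
  then have "m dvd i" by simp
  then show False using assms(3,4) dvd_imp_le by fastforce
qed

lemma cycle_E_sym: "cycle_E n x y \<Longrightarrow> cycle_E n y x"
  unfolding cycle_E_def by auto

lemma cycle_small:
  assumes "k \<ge> 1" "n \<ge> 3" "n \<le> 3 * k"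
  shows "chi_mu k (cycle_V n) (cycle_E n) = (n + 2) div 3"
proof -
  define m where "m = (n + 2) div 3"
  have m: "m \<ge> 1" "n \<le> 3 * m" "2 * m \<le> n" "m \<le> k" "m \<le> n" using assms unfolding m_def by auto
  define C where "C r = {j. j < n \<and> j mod m = r}" for r
  define P0 where "P0 = C ` {..<m}"
  have rC: "r \<in> C r" if "r < m" for r using that m unfolding C_def by auto
  have inj: "inj_on C {..<m}"
  proof
    fix i j assume "i \<in> {..<m}" "j \<in> {..<m}" "C i = C j"
    then have "i \<in> C j" using rC by auto
    then show "i = j" using \<open>i \<in> {..<m}\<close> unfolding C_def by auto
  qed
  have part: "is_partition (cycle_V n) P0"
    unfolding is_partition_def P0_def cycle_V_def
  proof (intro conjI ballI impI)
    show "\<Union> (C ` {..<m}) = {0..<n}"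
    proof
      show "\<Union> (C ` {..<m}) \<subseteq> {0..<n}" unfolding C_def by auto
      show "{0..<n} \<subseteq> \<Union> (C ` {..<m})"
      proof
        fix x assume "x \<in> {0..<n}"
        then have "x \<in> C (x mod m)" "x mod m \<in> {..<m}" unfolding C_def using m by auto
        then show "x \<in> \<Union> (C ` {..<m})" by blast
      qed
    qed
    fix X assume "X \<in> C ` {..<m}"
    then show "X \<noteq> {}" using rC by auto
  next
    fix X Y assume "X \<in> C ` {..<m}" "Y \<in> C ` {..<m}" "X \<noteq> Y"
    then obtain i j where "X = C i" "Y = C j" "i \<noteq> j" by auto
    then show "X \<inter> Y = {}" unfolding C_def by auto
  qed
  have mv: "\<forall>X\<in>P0. k_dist_mv_set k (cycle_V n) (cycle_E n) X"
  proof
    fix X assume "X \<in> P0"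
    then obtain r where X: "X = C r" unfolding P0_def by auto
    show "k_dist_mv_set k (cycle_V n) (cycle_E n) X"
    proof (rule mv_from_lt)
      show "X \<subseteq> cycle_V n" unfolding X C_def cycle_V_def by auto
      show "\<And>x y. cycle_E n x y \<Longrightarrow> cycle_E n y x" by (rule cycle_E_sym)
      fix u v assume uv: "u \<in> X" "v \<in> X" "u < v"
      then have um: "u mod m = r" "v mod m = r" "v < n" "u < n" unfolding X C_def by auto
      have "m dvd (v - u)" using mod_eq_dvd_iff_nat[of u v m] um uv by simp
      then obtain t where t: "v - u = m * t" by (auto elim: dvdE)
      have "t \<noteq> 0"
      proof
        assume "t = 0" with t have "v - u = 0" by simp
        with uv(3) show False by simp
      qed
      moreover have "t < 3"
      proof (rule ccontr)
        assume "\<not> t < 3"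
        then have "m * 3 \<le> m * t" by simp
        then show False using t m um by linarith
      qed
      ultimately have "t = 1 \<or> t = 2" by auto
      then show "\<exists>p. is_geodesic (cycle_V n) (cycle_E n) p u v \<and> walk_len p \<le> k \<and> internal p \<inter> X = {}"
      proof
        assume "t = 1"
        then have v: "v = u + m" using t uv by simp
        note fw = fwalk[OF \<open>u < n\<close>, of m]
        have lastv: "(u + m) mod n = v" using v um by simp
        have geo: "is_geodesic (cycle_V n) (cycle_E n) (fwalk n u m) u v"
        proof (rule geodesicI)
          show "is_walk (cycle_V n) (cycle_E n) (fwalk n u m) u v" using fw(1) lastv by simp
          fix q assume "is_walk (cycle_V n) (cycle_E n) q u v"
          from cyc_dist_lb[OF this] have "cd n u v \<le> walk_len q" .
          moreover have "cd n u v = m" unfolding cd_def fw_def using v m um by auto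
          ultimately show "walk_len (fwalk n u m) \<le> walk_len q" using fw(2) by simp
        qed
        have "internal (fwalk n u m) \<inter> X = {}"
        proof (rule ccontr)
          assume "internal (fwalk n u m) \<inter> X \<noteq> {}"
          then obtain i where i: "0 < i" "i < m" "(u + i) mod n \<in> X" using fw(3) by auto
          then have "(u + i) mod n = u + i" using v um by simp
          then have "(u + i) mod m = r" using i unfolding X C_def by auto
          then show False using mod_gap[OF um(1) _ i(1,2)] by simp
        qed
        then show ?thesis using geo fw(2) m by auto
      next
        assume "t = 2"
        then have v: "v = u + 2 * m" using t uv by simp
        then have "u < m" using m um by linarith
        note fw = fwalk[OF \<open>v < n\<close>, of "n - 2 * m"]
        have lastu: "(v + (n - 2 * m)) mod n = u" using v um m by simp
        have geo: "is_geodesic (cycle_V n) (cycle_E n) (fwalk n v (n - 2 * m)) v u"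
        proof (rule geodesicI)
          show "is_walk (cycle_V n) (cycle_E n) (fwalk n v (n - 2 * m)) v u" using fw(1) lastu by simp
          fix q assume "is_walk (cycle_V n) (cycle_E n) q v u"
          from cyc_dist_lb[OF this] have "cd n v u \<le> walk_len q" .
          moreover have "cd n v u = n - 2 * m" unfolding cd_def fw_def using v m um by auto
          ultimately show "walk_len (fwalk n v (n - 2 * m)) \<le> walk_len q" using fw(2) by simp
        qed
        have int: "internal (fwalk n v (n - 2 * m)) \<inter> X = {}"
        proof (rule ccontr)
          assume "internal (fwalk n v (n - 2 * m)) \<inter> X \<noteq> {}"
          then obtain i where i: "0 < i" "i < n - 2 * m" "(v + i) mod n \<in> X" using fw(3) by auto
          then have im: "(v + i) mod n mod m = r" unfolding X C_def by auto
          show False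
          proof (cases "v + i < n")
            case True
            then have "(v + i) mod m = r" using im by simp
            moreover have "i < m" using i m by linarith
            ultimately show False using mod_gap[OF um(2) _ i(1)] by simp
          next
            case False
            then have "(v + i) mod n = v + i - n" using le_mod_geq[of n "v+i"] i um v
              by (simp add: mod_less)
            moreover have "v + i - n < u" using i v False by linarith
            ultimately have "(v + i - n) mod m = r" "(v + i - n) < m" "u mod m = u"
              using im \<open>u < m\<close> by auto
            then show False using um \<open>v + i - n < u\<close> by simp
          qed
        qed
        have "is_geodesic (cycle_V n) (cycle_E n) (rev (fwalk n v (n - 2 * m))) u v"
          by (rule geodesic_rev[OF geo]) (rule cycle_E_sym)
        moreover have "walk_len (rev (fwalk n v (n - 2 * m))) \<le> k"
          using fw(2) m by (simp add: walk_len_def)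
        ultimately show ?thesis using int internal_rev by metis
      qed
    qed
  qed
  show ?thesis unfolding m_def[symmetric]
  proof (rule chi_eqI[OF part _ _ mv])
    show "finite P0" unfolding P0_def by simp
    show "card P0 = m" unfolding P0_def using card_image[OF inj] by simp
    fix P assume P: "is_partition (cycle_V n) P" "finite P" "\<forall>X\<in>P. k_dist_mv_set k (cycle_V n) (cycle_E n) X"
    have "\<forall>X\<in>P. card X \<le> 3"
    proof
      fix X assume "X \<in> P"
      then have mvX: "k_dist_mv_set k (cycle_V n) (cycle_E n) X" "X \<subseteq> cycle_V n"
        using P unfolding is_partition_def by auto
      show "card X \<le> 3"
        by (rule card_le3) (use mvX cycle_no4 in \<open>auto simp: cycle_V_def intro: finite_subset\<close>)
    qed
    from card_part_le[OF P(1,2) this] have "n \<le> 3 * card P" by (simp add: cycle_V_def)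
    then show "m \<le> card P" unfolding m_def by linarith
  qed
qed

lemma cycle_big:
  assumes "n \<ge> 3" "3 * k < n" "k \<ge> 1"
  shows "chi_mu k (cycle_V n) (cycle_E n) = (n + 1) div 2"
proof -
  define S where "S i = {2*i, 2*i+1} \<inter> {0..<n}" for i :: nat
  define P0 where "P0 = S ` {..<(n+1) div 2}"
  have inj: "inj_on S {..<(n+1) div 2}"
  proof
    fix i j assume "i \<in> {..<(n+1) div 2}" "j \<in> {..<(n+1) div 2}" "S i = S j"
    then have "2*i \<in> S j" unfolding S_def by auto
    then show "i = j" unfolding S_def by auto
  qed
  have part: "is_partition (cycle_V n) P0"
    unfolding is_partition_def P0_def cycle_V_def
  proof (intro conjI ballI impI)
    show "\<Union> (S ` {..<(n + 1) div 2}) = {0..<n}"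
    proof
      show "\<Union> (S ` {..<(n + 1) div 2}) \<subseteq> {0..<n}" unfolding S_def by auto
      show "{0..<n} \<subseteq> \<Union> (S ` {..<(n + 1) div 2})"
      proof
        fix x assume "x \<in> {0..<n}"
        then have "x \<in> S (x div 2)" "x div 2 \<in> {..<(n+1) div 2}" unfolding S_def by auto
        then show "x \<in> \<Union> (S ` {..<(n + 1) div 2})" by blast
      qed
    qed
    fix X assume "X \<in> S ` {..<(n + 1) div 2}"
    then obtain i where "i < (n+1) div 2" "X = S i" by auto
    then show "X \<noteq> {}" unfolding S_def by auto
  next
    fix X Y assume "X \<in> S ` {..<(n + 1) div 2}" "Y \<in> S ` {..<(n + 1) div 2}" "X \<noteq> Y"
    then obtain i j where "X = S i" "Y = S j" "i \<noteq> j" by auto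
    then show "X \<inter> Y = {}" unfolding S_def by auto
  qed
  have mv: "\<forall>X\<in>P0. k_dist_mv_set k (cycle_V n) (cycle_E n) X"
  proof
    fix X assume "X \<in> P0"
    then obtain i where X: "X = S i" unfolding P0_def by auto
    show "k_dist_mv_set k (cycle_V n) (cycle_E n) X"
    proof (rule mv_from_lt)
      show "X \<subseteq> cycle_V n" unfolding X S_def cycle_V_def by auto
      show "\<And>x y. cycle_E n x y \<Longrightarrow> cycle_E n y x" by (rule cycle_E_sym)
      fix u v assume uv: "u \<in> X" "v \<in> X" "u < v"
      then have "u = 2*i" "v = 2*i+1" "v < n" unfolding X S_def by auto
      then have "cycle_E n u v" "u \<in> cycle_V n" "v \<in> cycle_V n" "u \<noteq> v"
        unfolding cycle_E_def cycle_V_def by auto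
      note e = edge_geodesic[of "cycle_E n" u v "cycle_V n", OF this]
      show "\<exists>p. is_geodesic (cycle_V n) (cycle_E n) p u v \<and> walk_len p \<le> k \<and> internal p \<inter> X = {}"
        using e assms(3) by (intro exI[of _ "[u,v]"]) auto
    qed
  qed
  show ?thesis
  proof (rule chi_eqI[OF part _ _ mv])
    show "finite P0" unfolding P0_def by simp
    show "card P0 = (n + 1) div 2" unfolding P0_def using card_image[OF inj] by simp
    fix P assume P: "is_partition (cycle_V n) P" "finite P" "\<forall>X\<in>P. k_dist_mv_set k (cycle_V n) (cycle_E n) X"
    have "\<forall>X\<in>P. card X \<le> 2"
    proof
      fix X assume "X \<in> P"
      then have mvX: "k_dist_mv_set k (cycle_V n) (cycle_E n) X" "X \<subseteq> cycle_V n"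
        using P unfolding is_partition_def by auto
      show "card X \<le> 2"
        by (rule card_le2) (use mvX cycle_no3 assms(2) in \<open>auto simp: cycle_V_def intro: finite_subset\<close>)
    qed
    from card_part_le[OF P(1,2) this] have "n \<le> 2 * card P" by (simp add: cycle_V_def)
    then show "(n + 1) div 2 \<le> card P" by linarith
  qed
qed

theorem proposition2p4:
  fixes k :: nat
  assumes "k \<ge> 1"
  shows "(\<forall>n::nat. n \<ge> 1 \<longrightarrow> chi_mu k (path_V n) path_E = (n + 1) div 2) \<and>
         (\<forall>n::nat. n \<ge> 3 \<longrightarrow>
            chi_mu k (cycle_V n) (cycle_E n) = (if n \<le> 3 * k then (n + 2) div 3 else (n + 1) div 2))"
  using path_part[OF assms] cycle_small[OF assms] cycle_big assms by auto

end
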